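(* Consider the location-dependent model in which, for each edge $(i,j)\in\mathcal E$ with $i>j$, $y_{ij}\sim\mathbb P^{ij}_{x_i-x_j}$ independently. Let $\overline{\mathsf{Hel}}_\alpha^{\min}=\min\{\mathsf{Hel}_\alpha(\mathbb P_l^{ij}\|\mathbb P_k^{ij}):l\ne k,\ 0\le l,k<M,\ (i,j)\in\mathcal E\}$ and $\overline D_\alpha^{\min}=-\frac1{1-\alpha}\log\big(1-(1-\alpha)\overline{\mathsf{Hel}}_\alpha^{\min}\big)$. For any connected graph $\mathcal G$ and any $\delta>0$, $P_{\mathsf e}(\psi_{\mathrm{ml}})\le\frac1{(2n)^\delta-1}$ provided that \[ \sup_{0<\alpha<1}\{(1-\alpha)\overline{\mathsf{Hel}}_\alpha^{\min}\}\cdot\mathsf{mincut}\ge 8\tau^{\mathrm{cut}}+(\delta+8)\log(2n)+4\log M, \] and the same conclusion holds if instead $\sup_{0<\alpha<1}\{(1-\alpha)\overline{D}_\alpha^{\min}\}\cdot\mathsf{mincut}\ge 8\tau^{\mathrm{cut}}+(\delta+8)\log(2n)+4\log M$.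
   Context: $n\ge2$, $M\ge2$, $\mathcal X=\{0,\dots,M-1\}$ with a group operation $+$; $x_i-x_j:=x_i+(-x_j)$; $\boldsymbol x+l\cdot\mathbf1:=(x_1+l,\dots,x_n+l)$. $\mathcal G=(\mathcal V,\mathcal E)$ undirected on $\{1,\dots,n\}$; for each edge the measures $\mathbb P^{ij}_l$, $l\in\mathcal X$, are mutually absolutely continuous probability measures on an output space. $\mathrm{dist}(\boldsymbol w,\boldsymbol x)=1-\max_l\mathbb I\{\boldsymbol w=\boldsymbol x+l\cdot\mathbf1\}$; $P_{\mathsf e}(\psi)=\max_{\boldsymbol x}\mathbb P\{\mathrm{dist}(\psi(\boldsymbol y),\boldsymbol x)\ne0\mid\boldsymbol x\}$; $\psi_{\mathrm{ml}}(\boldsymbol y)=\arg\max_{\boldsymbol x}\mathbb P\{\boldsymbol y\mid\boldsymbol x\}$. $\mathsf{Hel}_\alpha(P\|Q)=\frac1{1-\alpha}[1-\int(\mathrm dP)^\alpha(\mathrm dQ)^{1-\alpha}]$ for $\alpha\in(0,1)$. $e(\mathcal S,\mathcal S^{\mathrm c})$: number of edges between $\mathcal S$ and its complement; $\mathsf{mincut}=\min_{\emptyset\ne\mathcal S\subsetneq\mathcal V}e(\mathcal S,\mathcal S^{\mathrm c})$; $\mathcal N(m)=\{\mathcal S\subseteq\mathcal V:e(\mathcal S,\mathcal S^{\mathrm c})\le m\}$; $\tau^{\mathrm{cut}}=\max_k\frac1k\log|\mathcal N(k\cdot\mathsf{mincut})|$ over positive integers $k$. *)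

theory Defs
  imports "HOL-Probability.Probability"
begin

(* Vertex set V = {1..n}. An undirected graph is a set E of pairs (i,j) with
   1 <= j < i <= n (each undirected edge stored once, with i > j). *)

definition graph_ok :: "nat \<Rightarrow> (nat \<times> nat) set \<Rightarrow> bool" where
  "graph_ok n E \<longleftrightarrow> E \<subseteq> {(i,j). 1 \<le> j \<and> j < i \<and> i \<le> n}"

definition adj :: "(nat \<times> nat) set \<Rightarrow> (nat \<times> nat) set" where
  "adj E = E \<union> converse E"

definition graph_connected :: "nat \<Rightarrow> (nat \<times> nat) set \<Rightarrow> bool" where
  "graph_connected n E \<longleftrightarrow> (\<forall>i\<in>{1..n}. \<forall>j\<in>{1..n}. (i,j) \<in> (adj E)\<^sup>*)"

definition cut_size :: "nat \<Rightarrow> (nat \<times> nat) set \<Rightarrow> nat set \<Rightarrow> nat" where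
  "cut_size n E S = card {e \<in> E. (fst e \<in> S \<and> snd e \<in> {1..n} - S) \<or> (snd e \<in> S \<and> fst e \<in> {1..n} - S)}"

definition mincut :: "nat \<Rightarrow> (nat \<times> nat) set \<Rightarrow> nat" where
  "mincut n E = Min {cut_size n E S | S. S \<noteq> {} \<and> S \<subset> {1..n}}"

definition cutN :: "nat \<Rightarrow> (nat \<times> nat) set \<Rightarrow> nat \<Rightarrow> nat set set" where
  "cutN n E m = {S. S \<subseteq> {1..n} \<and> cut_size n E S \<le> m}"

definition tau_cut :: "nat \<Rightarrow> (nat \<times> nat) set \<Rightarrow> real" where
  "tau_cut n E = (SUP k\<in>{1::nat..}. ln (real (card (cutN n E (k * mincut n E)))) / real k)"

(* Renyi-type Hellinger divergence Hel_alpha(P||Q) for P = p\<cdot>mu, Q = q\<cdot>mu (densities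
   w.r.t. a common dominating measure mu):  1/(1-alpha) [1 - \<integral> p^alpha q^(1-alpha) dmu] *)
definition hel :: "real \<Rightarrow> 'b measure \<Rightarrow> ('b \<Rightarrow> real) \<Rightarrow> ('b \<Rightarrow> real) \<Rightarrow> real" where
  "hel \<alpha> \<mu> p q = (1 - (\<integral>y. p y powr \<alpha> * q y powr (1 - \<alpha>) \<partial>\<mu>)) / (1 - \<alpha>)"

definition labels :: "nat \<Rightarrow> (nat \<Rightarrow> 'g) set" where
  "labels n = {1..n} \<rightarrow>\<^sub>E (UNIV :: 'g set)"

definition shift :: "nat \<Rightarrow> (nat \<Rightarrow> 'g::group_add) \<Rightarrow> 'g \<Rightarrow> (nat \<Rightarrow> 'g)" where
  "shift n x l = (\<lambda>i\<in>{1..n}. x i + l)"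

definition ldist :: "nat \<Rightarrow> (nat \<Rightarrow> 'g::group_add) \<Rightarrow> (nat \<Rightarrow> 'g) \<Rightarrow> nat" where
  "ldist n w x = (if \<exists>l. w = shift n x l then 0 else 1)"

(* law of y = (y_e)_{e\<in>E} given x: independent y_ij ~ P^{ij}_{x_i - x_j}, P^e_l = f e l \<cdot> mu e *)
definition obs :: "(nat \<times> nat) set \<Rightarrow> (nat \<times> nat \<Rightarrow> 'b measure) \<Rightarrow>
    (nat \<times> nat \<Rightarrow> 'g::group_add \<Rightarrow> 'b \<Rightarrow> real) \<Rightarrow> (nat \<Rightarrow> 'g) \<Rightarrow> (nat \<times> nat \<Rightarrow> 'b) measure" where
  "obs E mu f x = (\<Pi>\<^sub>M e\<in>E. density (mu e) (\<lambda>y. ennreal (f e (x (fst e) - x (snd e)) y)))"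

(* likelihood P{y | x} (density w.r.t. the product of the dominating measures) *)
definition lik :: "(nat \<times> nat) set \<Rightarrow> (nat \<times> nat \<Rightarrow> 'g::group_add \<Rightarrow> 'b \<Rightarrow> real) \<Rightarrow>
    (nat \<Rightarrow> 'g) \<Rightarrow> (nat \<times> nat \<Rightarrow> 'b) \<Rightarrow> real" where
  "lik E f x y = (\<Prod>e\<in>E. f e (x (fst e) - x (snd e)) (y e))"

definition is_ml :: "nat \<Rightarrow> (nat \<times> nat) set \<Rightarrow> (nat \<times> nat \<Rightarrow> 'b measure) \<Rightarrow>
    (nat \<times> nat \<Rightarrow> 'g::{group_add,finite} \<Rightarrow> 'b \<Rightarrow> real) \<Rightarrow> ((nat \<times> nat \<Rightarrow> 'b) \<Rightarrow> (nat \<Rightarrow> 'g)) \<Rightarrow> bool" where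
  "is_ml n E mu f psi \<longleftrightarrow>
     psi \<in> measurable (\<Pi>\<^sub>M e\<in>E. mu e) (count_space (labels n)) \<and>
     (\<forall>y\<in>space (\<Pi>\<^sub>M e\<in>E. mu e). psi y \<in> labels n \<and> (\<forall>w\<in>labels n. lik E f w y \<le> lik E f (psi y) y))"

definition err_prob :: "nat \<Rightarrow> (nat \<times> nat) set \<Rightarrow> (nat \<times> nat \<Rightarrow> 'b measure) \<Rightarrow>
    (nat \<times> nat \<Rightarrow> 'g::{group_add,finite} \<Rightarrow> 'b \<Rightarrow> real) \<Rightarrow> ((nat \<times> nat \<Rightarrow> 'b) \<Rightarrow> (nat \<Rightarrow> 'g)) \<Rightarrow> real" where
  "err_prob n E mu f psi = Max ((\<lambda>x. measure (obs E mu f x)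
       {y \<in> space (obs E mu f x). ldist n (psi y) x \<noteq> 0}) ` labels n)"

definition hel_min :: "(nat \<times> nat) set \<Rightarrow> (nat \<times> nat \<Rightarrow> 'b measure) \<Rightarrow>
    (nat \<times> nat \<Rightarrow> 'g \<Rightarrow> 'b \<Rightarrow> real) \<Rightarrow> real \<Rightarrow> real" where
  "hel_min E mu f \<alpha> = Min {hel \<alpha> (mu e) (f e l) (f e k) | e l k. e \<in> E \<and> l \<noteq> k}"

definition D_min :: "(nat \<times> nat) set \<Rightarrow> (nat \<times> nat \<Rightarrow> 'b measure) \<Rightarrow>
    (nat \<times> nat \<Rightarrow> 'g \<Rightarrow> 'b \<Rightarrow> real) \<Rightarrow> real \<Rightarrow> real" where
  "D_min E mu f \<alpha> = - (1 / (1 - \<alpha>)) * ln (1 - (1 - \<alpha>) * hel_min E mu f \<alpha>)"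

end

theory Submission
  imports Defs
begin


lemma grp_edge_eq:
  fixes a b c d :: "'g::group_add"
  shows "(a - b = c - d) \<longleftrightarrow> (- c + a = - d + b)"
proof
  assume "a - b = c - d"
  then have "a = c - d + b" by (metis diff_add_cancel)
  also have "\<dots> = c + (- d + b)" by (simp only: diff_conv_add_uminus add.assoc)
  finally show "- c + a = - d + b" by (simp only: minus_add_cancel)
next
  assume "- c + a = - d + b"
  then have "a = c + (- d + b)" by (metis add_minus_cancel)
  then show "a - b = c - d" by (simp only: diff_conv_add_uminus add.assoc right_minus add_0_right)
qed

definition lvl :: "nat \<Rightarrow> (nat \<Rightarrow> 'g::group_add) \<Rightarrow> (nat \<Rightarrow> 'g) \<Rightarrow> 'g \<Rightarrow> nat set" where
  "lvl n x w g = {i\<in>{1..n}. - x i + w i = g}"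

lemma graph_sub: "graph_ok n E \<Longrightarrow> E \<subseteq> {1..n} \<times> {1..n}"
  unfolding graph_ok_def by auto

lemma graph_finite: assumes g: "graph_ok n E" shows "finite E"
proof -
  have "finite ({1..n} \<times> {1..n})" by (rule finite_cartesian_product) simp_all
  then show ?thesis using graph_sub[OF g] by (rule finite_subset[rotated])
qed

lemma graph_card: "graph_ok n E \<Longrightarrow> card E \<le> n^2"
proof -
  assume "graph_ok n E"
  then have "card E \<le> card ({1..n} \<times> {1..n})" by (intro card_mono graph_sub) simp_all
  then show ?thesis by (simp add: card_cartesian_product power2_eq_square)
qed

lemma card_filter_sum: "finite A \<Longrightarrow> card {a\<in>A. P a} = (\<Sum>a\<in>A. if P a then 1 else 0)"
proof -
  assume f: "finite A"
  have "card {a\<in>A. P a} = (\<Sum>a\<in>{a\<in>A. P a}. 1)" by simp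
  also have "\<dots> = (\<Sum>a\<in>A. if P a then 1 else 0)" by (rule sum.inter_filter[OF f])
  finally show ?thesis .
qed

lemma cut_sum_le:
  fixes x w :: "nat \<Rightarrow> 'g::{group_add,finite}"
  assumes g: "graph_ok n E"
  shows "(\<Sum>g\<in>UNIV. cut_size n E (lvl n x w g))
           \<le> 2 * card {e\<in>E. w (fst e) - w (snd e) \<noteq> x (fst e) - x (snd e)}"
proof -
  have fE: "finite E" using graph_finite[OF g] .
  define C where "C g e = ((fst e \<in> lvl n x w g \<and> snd e \<in> {1..n} - lvl n x w g)
        \<or> (snd e \<in> lvl n x w g \<and> fst e \<in> {1..n} - lvl n x w g))" for g e
  have "(\<Sum>g\<in>UNIV. cut_size n E (lvl n x w g)) = (\<Sum>g\<in>UNIV. \<Sum>e\<in>E. if C g e then (1::nat) else 0)"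
  proof (rule sum.cong[OF refl])
    fix g
    have "cut_size n E (lvl n x w g) = card {e\<in>E. C g e}"
      unfolding cut_size_def C_def by (rule refl)
    then show "cut_size n E (lvl n x w g) = (\<Sum>e\<in>E. if C g e then (1::nat) else 0)"
      using card_filter_sum[OF fE] by simp
  qed
  also have "\<dots> = (\<Sum>e\<in>E. \<Sum>g\<in>UNIV. if C g e then (1::nat) else 0)"
    by (rule sum.swap)
  also have "\<dots> \<le> (\<Sum>e\<in>E. if w (fst e) - w (snd e) \<noteq> x (fst e) - x (snd e) then (2::nat) else 0)"
  proof (rule sum_mono)
    fix e assume eE: "e \<in> E"
    obtain i j where e: "e = (i,j)" by fastforce
    have ij: "i \<in> {1..n}" "j \<in> {1..n}" using g eE e unfolding graph_ok_def by auto
    have Cg: "C g e \<longleftrightarrow> (- x i + w i = g \<and> - x j + w j \<noteq> g) \<or> (- x j + w j = g \<and> - x i + w i \<noteq> g)" for g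
      unfolding C_def lvl_def e using ij by auto
    have "(\<Sum>g\<in>UNIV. if C g e then (1::nat) else 0) = card {g. C g e}"
      using card_filter_sum[of UNIV "\<lambda>g. C g e"] by simp
    also have "\<dots> \<le> (if w (fst e) - w (snd e) \<noteq> x (fst e) - x (snd e) then (2::nat) else 0)"
    proof (cases "w i - w j = x i - x j")
      case True
      then have "- x i + w i = - x j + w j" using grp_edge_eq by blast
      then have "{g. C g e} = {}" using Cg by auto
      then show ?thesis by simp
    next
      case False
      have "{g. C g e} \<subseteq> {- x i + w i, - x j + w j}" using Cg by auto
      then have "card {g. C g e} \<le> card {- x i + w i, - x j + w j}" by (intro card_mono) auto
      also have "\<dots> \<le> 2" by (simp add: card_insert_if)
      finally show ?thesis using False e by simp
    qed
    finally show "(\<Sum>g\<in>UNIV. if C g e then (1::nat) else 0) \<le> (if w (fst e) - w (snd e) \<noteq> x (fst e) - x (snd e) then (2::nat) else 0)" .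
  qed
  also have "\<dots> = (\<Sum>e\<in>E. 2 * (if w (fst e) - w (snd e) \<noteq> x (fst e) - x (snd e) then (1::nat) else 0))"
    by (rule sum.cong) auto
  also have "\<dots> = 2 * card {e\<in>E. w (fst e) - w (snd e) \<noteq> x (fst e) - x (snd e)}"
    by (simp only: sum_distrib_left[symmetric] card_filter_sum[OF fE])
  finally show ?thesis .
qed



definition PP :: "nat \<Rightarrow> nat set set" where
  "PP n = {S. S \<subseteq> {1..n} \<and> S \<noteq> {} \<and> S \<noteq> {1..n}}"
definition Q0 :: "nat \<Rightarrow> nat set set" where
  "Q0 n = {S. S \<subseteq> {1..n} \<and> S \<noteq> {1..n}}"
definition Wset :: "nat \<Rightarrow> (nat \<Rightarrow> 'g::group_add) \<Rightarrow> (nat \<Rightarrow> 'g) set" where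
  "Wset n x = {w \<in> labels n. \<not> (\<exists>l. w = shift n x l)}"
definition cdiff :: "(nat \<times> nat) set \<Rightarrow> (nat \<Rightarrow> 'g::group_add) \<Rightarrow> (nat \<Rightarrow> 'g) \<Rightarrow> nat" where
  "cdiff E x w = card {e\<in>E. w (fst e) - w (snd e) \<noteq> x (fst e) - x (snd e)}"

lemma finite_PP: "finite (PP n)"
  by (rule finite_subset[of _ "Pow {1..n}"]) (auto simp: PP_def)
lemma finite_Q0: "finite (Q0 n)"
  by (rule finite_subset[of _ "Pow {1..n}"]) (auto simp: Q0_def)
lemma Q0_eq: "n \<ge> 1 \<Longrightarrow> Q0 n = insert {} (PP n)"
  by (auto simp: Q0_def PP_def)
lemma empty_notin_PP: "{} \<notin> PP n"
  by (simp add: PP_def)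
lemma finite_labels: "finite (labels n :: (nat \<Rightarrow> 'g::finite) set)"
  unfolding labels_def by (rule finite_PiE) auto
lemma finite_Wset: "finite (Wset n x :: (nat \<Rightarrow> 'g::{finite,group_add}) set)"
  by (rule finite_subset[OF _ finite_labels]) (auto simp: Wset_def)

lemma cut_empty: "cut_size n E {} = 0"
  by (simp add: cut_size_def)

lemma q_pow_le_prod:
  fixes x w :: "nat \<Rightarrow> 'g::{group_add,finite}"
  assumes g: "graph_ok n E" and q: "0 \<le> q" "q \<le> (1::real)"
  shows "q ^ cdiff E x w \<le> (\<Prod>g\<in>UNIV. sqrt q ^ cut_size n E (lvl n x w g))"
proof -
  have "(\<Prod>g\<in>UNIV. sqrt q ^ cut_size n E (lvl n x w g)) = sqrt q ^ (\<Sum>g\<in>UNIV. cut_size n E (lvl n x w g))"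
    by (simp add: power_sum)
  also have "\<dots> \<ge> sqrt q ^ (2 * cdiff E x w)"
    by (rule power_decreasing) (use cut_sum_le[OF g, of x w] q in \<open>auto simp: cdiff_def\<close>)
  finally show ?thesis using q by (simp add: power_mult)
qed

lemma lvl_inj: "inj_on (\<lambda>w g. lvl n x w g) (labels n)"
proof (rule inj_onI)
  fix w w' assume w: "w \<in> labels n" and w': "w' \<in> labels n"
    and eq: "(\<lambda>g. lvl n x w g) = (\<lambda>g. lvl n x w' g)"
  show "w = w'"
  proof (rule PiE_ext[OF w[unfolded labels_def] w'[unfolded labels_def]])
    fix i assume i: "i \<in> {1..n}"
    have "i \<in> lvl n x w (- x i + w i)" using i by (simp add: lvl_def)
    then have "i \<in> lvl n x w' (- x i + w i)" using eq by metis
    then have "- x i + w' i = - x i + w i" by (simp add: lvl_def)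
    then show "w i = w' i" by simp
  qed
qed

lemma lvl_sub: "lvl n x w g \<subseteq> {1..n}"
  by (auto simp: lvl_def)

lemma lvl_full_shift:
  assumes w: "w \<in> labels n" and full: "lvl n x w g = {1..n}"
  shows "w = shift n x g"
proof (rule PiE_ext[OF w[unfolded labels_def]])
  show "shift n x g \<in> {1..n} \<rightarrow>\<^sub>E UNIV" by (simp add: shift_def)
  fix i assume i: "i \<in> {1..n}"
  then have "i \<in> lvl n x w g" using full by simp
  then have "- x i + w i = g" by (simp add: lvl_def)
  then have "w i = x i + g" by (metis add_minus_cancel)
  then show "w i = shift n x g i" using i by (simp add: shift_def)
qed

definition Qab :: "nat \<Rightarrow> 'g \<times> 'g \<Rightarrow> 'g \<Rightarrow> nat set set" where
  "Qab n p g = (if g = fst p \<or> g = snd p then PP n else Q0 n)"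

lemma lvl_in_Qab:
  fixes x :: "nat \<Rightarrow> 'g::group_add"
  assumes n: "n \<ge> 1" and w: "w \<in> Wset n x"
  shows "\<exists>p\<in>{p. fst p \<noteq> snd p}. (\<lambda>g. lvl n x w g) \<in> PiE UNIV (Qab n p)"
proof -
  have wl: "w \<in> labels n" using w by (simp add: Wset_def)
  have nfull: "lvl n x w g \<noteq> {1..n}" for g
    using lvl_full_shift[OF wl] w by (auto simp: Wset_def)
  define a where "a = - x 1 + w 1"
  have 1: "(1::nat) \<in> {1..n}" using n by simp
  have a1: "1 \<in> lvl n x w a" using 1 by (simp add: lvl_def a_def)
  obtain j where j: "j \<in> {1..n}" "j \<notin> lvl n x w a"
    using nfull[of a] lvl_sub[of n x w a] by blast
  define b where "b = - x j + w j"
  have ab: "a \<noteq> b" using j by (auto simp: lvl_def b_def)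
  have bj: "j \<in> lvl n x w b" using j by (simp add: lvl_def b_def)
  have "(\<lambda>g. lvl n x w g) \<in> PiE UNIV (Qab n (a,b))"
  proof -
    have "lvl n x w g \<in> Qab n (a, b) g" for g
    proof (cases "g = a \<or> g = b")
      case True
      then have "lvl n x w g \<noteq> {}" using a1 bj by blast
      then show ?thesis using True nfull[of g] lvl_sub[of n x w g] by (simp add: Qab_def PP_def)
    next
      case False
      then show ?thesis using nfull[of g] lvl_sub[of n x w g] by (simp add: Qab_def Q0_def)
    qed
    then show ?thesis by (simp add: PiE_iff)
  qed
  then show ?thesis using ab by force
qed

lemma sum_cover_le:
  fixes g :: "'a \<Rightarrow> real"
  assumes K: "finite K" and fin: "\<And>k. k \<in> K \<Longrightarrow> finite (A k)"
    and nn: "\<And>k x. k \<in> K \<Longrightarrow> x \<in> A k \<Longrightarrow> 0 \<le> g x"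
    and cov: "I \<subseteq> (\<Union>k\<in>K. A k)"
  shows "sum g I \<le> (\<Sum>k\<in>K. sum g (A k))"
proof -
  have "sum g I \<le> sum g (\<Union>k\<in>K. A k)"
    by (rule sum_mono2) (use K fin nn cov in auto)
  also have "\<dots> \<le> (\<Sum>k\<in>K. sum g (A k))"
    using K fin nn
  proof (induction K rule: finite_induct)
    case empty then show ?case by simp
  next
    case (insert k K)
    have fU: "finite (\<Union>k\<in>K. A k)" using insert by auto
    have fA: "finite (A k)" using insert by auto
    have "sum g (\<Union>k\<in>insert k K. A k) = sum g (A k \<union> (\<Union>k\<in>K. A k))" by simp
    also have "\<dots> = sum g (A k) + sum g (\<Union>k\<in>K. A k) - sum g (A k \<inter> (\<Union>k\<in>K. A k))"
      using sum_Un[OF fA fU, of g] by simp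
    also have "\<dots> \<le> sum g (A k) + sum g (\<Union>k\<in>K. A k)"
      using insert.prems by (auto intro!: sum_nonneg)
    also have "\<dots> \<le> sum g (A k) + (\<Sum>k\<in>K. sum g (A k))"
      using insert by auto
    finally show ?case using insert by simp
  qed
  finally show ?thesis .
qed



lemma prod_Qab:
  fixes p :: "'g::finite \<times> 'g"
  assumes p: "fst p \<noteq> snd p" and n: "n \<ge> 1" and H0: "0 \<le> H"
    and hH: "sum h (PP n) = H" and h0: "h {} = (1::real)"
  shows "(\<Prod>g\<in>UNIV. \<Sum>X\<in>Qab n p g. h X) \<le> H^2 * (1+H)^CARD('g)"
proof -
  have sQ0: "sum h (Q0 n) = 1 + H"
    using Q0_eq[OF n] finite_PP[of n] empty_notin_PP[of n] hH h0 by simp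
  have "(\<Prod>g\<in>UNIV. \<Sum>X\<in>Qab n p g. h X) = (\<Prod>g\<in>UNIV. if g \<in> {fst p, snd p} then H else 1 + H)"
    by (rule prod.cong) (auto simp: Qab_def hH sQ0)
  also have "\<dots> = (\<Prod>g\<in>UNIV \<inter> {g. g \<in> {fst p, snd p}}. H) * (\<Prod>g\<in>UNIV \<inter> - {g. g \<in> {fst p, snd p}}. 1 + H)"
    by (rule prod.If_cases) simp
  also have "\<dots> = H^2 * (1+H)^(card (UNIV - {fst p, snd p}))"
  proof -
    have e: "UNIV \<inter> {g. g \<in> {fst p, snd p}} = {fst p, snd p}"
      "UNIV \<inter> - {g. g \<in> {fst p, snd p}} = UNIV - {fst p, snd p}" by auto
    have c2: "card {fst p, snd p} = 2" using p by simp
    show ?thesis by (simp only: e prod_constant c2)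
  qed
  also have "\<dots> \<le> H^2 * (1+H)^CARD('g)"
    by (intro mult_left_mono power_increasing card_mono) (use H0 in auto)
  finally show ?thesis .
qed

lemma sum_W_le:
  fixes x :: "nat \<Rightarrow> 'g::{group_add,finite}"
  assumes g: "graph_ok n E" and n: "n \<ge> 1" and q: "0 \<le> q" "q \<le> (1::real)"
  shows "(\<Sum>w\<in>Wset n x. q ^ cdiff E x w)
     \<le> real CARD('g) ^ 2 * (sum (\<lambda>X. sqrt q ^ cut_size n E X) (PP n))^2
          * (1 + sum (\<lambda>X. sqrt q ^ cut_size n E X) (PP n)) ^ CARD('g)"
proof -
  define h where "h X = sqrt q ^ cut_size n E X" for X
  define H where "H = sum h (PP n)"
  define L where "L w = (\<lambda>g. lvl n x w g)" for w
  define Pairs where "Pairs = {p::'g\<times>'g. fst p \<noteq> snd p}"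
  have h0: "0 \<le> h X" for X using q by (simp add: h_def)
  have H0: "0 \<le> H" unfolding H_def by (rule sum_nonneg) (simp add: h0)
  have hemp: "h {} = 1" by (simp add: h_def cut_empty)
  have injL: "inj_on L (Wset n x)"
    using lvl_inj[of n x] unfolding L_def by (rule inj_on_subset) (auto simp: Wset_def)
  have "(\<Sum>w\<in>Wset n x. q ^ cdiff E x w) \<le> (\<Sum>w\<in>Wset n x. \<Prod>g\<in>UNIV. h (L w g))"
    by (rule sum_mono) (simp add: h_def L_def q_pow_le_prod[OF g q])
  also have "\<dots> = (\<Sum>T\<in>L ` Wset n x. \<Prod>g\<in>UNIV. h (T g))"
    by (simp add: sum.reindex[OF injL])
  also have "\<dots> \<le> (\<Sum>p\<in>Pairs. \<Sum>T\<in>PiE UNIV (Qab n p). \<Prod>g\<in>UNIV. h (T g))"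
  proof (rule sum_cover_le)
    show "finite Pairs" by simp
    show "finite (PiE UNIV (Qab n p))" for p :: "'g \<times> 'g"
      by (rule finite_PiE) (auto simp: Qab_def finite_PP finite_Q0)
    show "0 \<le> (\<Prod>g\<in>UNIV. h (T g))" for T by (rule prod_nonneg) (simp add: h0)
    show "L ` Wset n x \<subseteq> (\<Union>p\<in>Pairs. PiE UNIV (Qab n p))"
      using lvl_in_Qab[OF n] unfolding L_def Pairs_def by blast
  qed
  also have "\<dots> = (\<Sum>p\<in>Pairs. \<Prod>g\<in>UNIV. \<Sum>X\<in>Qab n p g. h X)"
    by (rule sum.cong[OF refl], rule prod_sum_PiE[symmetric])
       (auto simp: Qab_def finite_PP finite_Q0)
  also have "\<dots> \<le> (\<Sum>p\<in>Pairs. H^2 * (1+H)^CARD('g))"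
    by (rule sum_mono, rule prod_Qab) (use n H0 hemp in \<open>auto simp: Pairs_def H_def\<close>)
  also have "\<dots> = real (card Pairs) * (H^2 * (1+H)^CARD('g))" by simp
  also have "\<dots> \<le> real CARD('g) ^ 2 * (H^2 * (1+H)^CARD('g))"
  proof (rule mult_right_mono)
    have "card Pairs \<le> card (UNIV :: ('g\<times>'g) set)" by (rule card_mono) auto
    moreover have "card (UNIV::('g\<times>'g) set) = CARD('g) * CARD('g)"
      by (metis UNIV_Times_UNIV card_cartesian_product)
    ultimately have "card Pairs \<le> CARD('g)^2" by (simp add: power2_eq_square)
    then show "real (card Pairs) \<le> real CARD('g) ^ 2" by (metis of_nat_le_iff of_nat_power)
    show "0 \<le> H^2 * (1+H)^CARD('g)" using H0 by simp
  qed
  finally show ?thesis by (simp add: H_def h_def mult.assoc)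
qed



lemma cutN_sub: "cutN n E m \<subseteq> Pow {1..n}"
  by (auto simp: cutN_def)
lemma cutN_fin: "finite (cutN n E m)"
  by (rule finite_subset[OF cutN_sub]) simp
lemma cutN_empty: "{} \<in> cutN n E m"
  by (simp add: cutN_def cut_empty)
lemma cutN_card_ge1: "1 \<le> card (cutN n E m)"
  using cutN_fin cutN_empty by (metis One_nat_def Suc_leI card_gt_0_iff empty_iff)
lemma cutN_card_le: "card (cutN n E m) \<le> 2^n"
proof -
  have "card (cutN n E m) \<le> card (Pow {1..n})" by (rule card_mono[OF _ cutN_sub]) simp
  then show ?thesis by (simp add: card_Pow)
qed

lemma tau_bdd: "bdd_above ((\<lambda>k. ln (real (card (cutN n E (k * mincut n E)))) / real k) ` {1::nat..})"
proof (rule bdd_aboveI2)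
  fix k :: nat assume k: "k \<in> {1..}"
  define c where "c = real (card (cutN n E (k * mincut n E)))"
  have c1: "1 \<le> c" unfolding c_def using cutN_card_ge1 by simp
  have "ln c \<ge> 0" using c1 by simp
  then have "ln c / real k \<le> ln c" using k by (simp add: divide_le_eq mult_le_cancel_left1)
  also have "\<dots> \<le> c" using c1 ln_le_minus_one[of c] by simp
  also have "\<dots> \<le> 2^n" unfolding c_def using cutN_card_le by (metis of_nat_le_iff of_nat_numeral of_nat_power)
  finally show "ln (real (card (cutN n E (k * mincut n E)))) / real k \<le> 2^n" by (simp add: c_def)
qed

lemma tau_upper:
  assumes k: "(1::nat) \<le> k"
  shows "real (card (cutN n E (k * mincut n E))) \<le> exp (real k * tau_cut n E)"
proof -
  define c where "c = real (card (cutN n E (k * mincut n E)))"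
  have c1: "1 \<le> c" unfolding c_def using cutN_card_ge1 by simp
  have "ln c / real k \<le> tau_cut n E"
    unfolding tau_cut_def c_def by (rule cSUP_upper[OF _ tau_bdd]) (use k in simp)
  then have "ln c \<le> real k * tau_cut n E" using k by (simp add: divide_le_eq mult.commute)
  then have "exp (ln c) \<le> exp (real k * tau_cut n E)" by (rule exp_mono)
  moreover have "exp (ln c) = c" using c1 by simp
  ultimately have "c \<le> exp (real k * tau_cut n E)" by linarith
  then show ?thesis by (simp only: c_def)
qed

lemma tau_nonneg: "0 \<le> tau_cut n E"
proof -
  have "1 \<le> exp (real 1 * tau_cut n E)"
    using tau_upper[of 1 n E] cutN_card_ge1[of n E "1 * mincut n E"] by linarith
  then show ?thesis by simp
qed

lemma mincut_le:
  assumes X: "X \<in> PP n"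
  shows "mincut n E \<le> cut_size n E X"
proof -
  have fin: "finite {cut_size n E S | S. S \<noteq> {} \<and> S \<subset> {1..n}}"
  proof -
    have "{cut_size n E S | S. S \<noteq> {} \<and> S \<subset> {1..n}} = cut_size n E ` {S. S \<noteq> {} \<and> S \<subset> {1..n}}"
      by auto
    also have "finite \<dots>" by (rule finite_imageI, rule finite_subset[of _ "Pow {1..n}"]) auto
    finally show ?thesis .
  qed
  have "cut_size n E X \<in> {cut_size n E S | S. S \<noteq> {} \<and> S \<subset> {1..n}}"
    using X by (auto simp: PP_def)
  then show ?thesis unfolding mincut_def by (rule Min_le[OF fin])
qed

lemma cut_le_card: "graph_ok n E \<Longrightarrow> cut_size n E X \<le> card E"
  unfolding cut_size_def by (rule card_mono[OF graph_finite]) auto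

lemma H_bound:
  assumes g: "graph_ok n E" and mc: "1 \<le> mincut n E"
    and r: "0 \<le> r" "r \<le> (1::real)"
    and v: "exp (tau_cut n E) * r ^ mincut n E \<le> 1"
  shows "sum (\<lambda>X. r ^ cut_size n E X) (PP n) \<le> real (card E) * (exp (2 * tau_cut n E) * r ^ mincut n E)"
proof -
  define t where "t = tau_cut n E"
  define m where "m = mincut n E"
  define h where "h X = r ^ cut_size n E X" for X
  define w where "w = r ^ m"
  define Pk where "Pk k = {X\<in>PP n. cut_size n E X \<le> k * m \<and> (k - 1) * m < cut_size n E X}" for k
  have t0: "0 \<le> t" unfolding t_def by (rule tau_nonneg)
  have w0: "0 \<le> w" using r by (simp add: w_def)
  have v': "exp t * w \<le> 1" using v by (simp add: t_def w_def m_def)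
  have "sum h (PP n) \<le> (\<Sum>k\<in>{1..card E}. sum h (Pk k))"
  proof (rule sum_cover_le)
    show "finite {1..card E}" by simp
    show "finite (Pk k)" for k by (rule finite_subset[OF _ finite_PP]) (auto simp: Pk_def)
    show "0 \<le> h X" for X using r by (simp add: h_def)
    show "PP n \<subseteq> (\<Union>k\<in>{1..card E}. Pk k)"
    proof
      fix X assume X: "X \<in> PP n"
      define c where "c = cut_size n E X"
      have mc': "m \<le> c" using mincut_le[OF X] by (simp add: m_def c_def)
      have cE: "c \<le> card E" using cut_le_card[OF g] by (simp add: c_def)
      have m1: "1 \<le> m" using mc by (simp add: m_def)
      define k where "k = (c - 1) div m + 1"
      have c1: "1 \<le> c" using mc' m1 by simp
      have dm: "(c - 1) div m * m + (c - 1) mod m = c - 1" by (rule div_mult_mod_eq)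
      have dle: "(c - 1) div m * m \<le> c - 1" using dm by linarith
      have kk: "k - 1 = (c - 1) div m" by (simp add: k_def)
      have lo: "(k - 1) * m < c" unfolding kk using dle c1 by linarith
      have mm: "(c - 1) mod m < m" using m1 by simp
      have "((c - 1) div m + 1) * m = (c - 1) div m * m + m" by (simp add: distrib_right)
      then have "c - 1 < ((c - 1) div m + 1) * m" using dm mm by linarith
      then have hi: "c \<le> k * m" by (simp add: k_def)
      have dd: "(c - 1) div m \<le> c - 1" by (rule div_le_dividend)
      have "k \<le> c" unfolding k_def using dd c1 by linarith
      then have "k \<in> {1..card E}" using cE by (simp add: k_def)
      moreover have "X \<in> Pk k" using X lo hi by (simp add: Pk_def c_def)
      ultimately show "X \<in> (\<Union>k\<in>{1..card E}. Pk k)" by blast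
    qed
  qed
  also have "\<dots> \<le> (\<Sum>k\<in>{1..card E}. exp (2 * t) * w)"
  proof (rule sum_mono)
    fix k assume k: "k \<in> {1..card E}"
    then have k1: "1 \<le> k" by simp
    define j where "j = max (k - 1) 1"
    have hb: "h X \<le> w ^ j" if X: "X \<in> Pk k" for X
    proof -
      have XP: "X \<in> PP n" and lo: "(k - 1) * m < cut_size n E X" using X by (auto simp: Pk_def)
      have "m \<le> cut_size n E X" using mincut_le[OF XP] by (simp add: m_def)
      then have "j * m \<le> cut_size n E X" using lo by (auto simp: j_def max_def)
      then have "r ^ cut_size n E X \<le> r ^ (j * m)" by (rule power_decreasing) (use r in auto)
      moreover have "r ^ (j * m) = (r ^ m) ^ j" by (metis power_mult mult.commute)
      ultimately show ?thesis by (simp add: h_def w_def)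
    qed
    have "sum h (Pk k) \<le> real (card (Pk k)) * w ^ j" by (rule sum_bounded_above) (use hb in auto)
    also have "\<dots> \<le> exp (real k * t) * w ^ j"
    proof (rule mult_right_mono)
      have "card (Pk k) \<le> card (cutN n E (k * m))"
        by (rule card_mono[OF cutN_fin]) (auto simp: Pk_def cutN_def PP_def)
      then have "real (card (Pk k)) \<le> real (card (cutN n E (k * m)))" by simp
      also have "\<dots> \<le> exp (real k * t)" using tau_upper[OF k1, of n E] by (simp add: t_def m_def)
      finally show "real (card (Pk k)) \<le> exp (real k * t)" .
      show "0 \<le> w ^ j" using w0 by simp
    qed
    also have "\<dots> \<le> exp (2 * t) * w"
    proof (cases "k = 1")
      case True
      then have "exp (real k * t) * w ^ j = exp t * w" by (simp add: j_def)
      also have "\<dots> \<le> exp (2 * t) * w" using t0 w0 by (intro mult_right_mono) simp_all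
      finally show ?thesis .
    next
      case False
      then have j: "j = k - 1" "1 \<le> k - 1" using k1 by (auto simp: j_def)
      have "real k * t = t + real (k - 1) * t" using k1 by (simp add: of_nat_diff algebra_simps)
      then have ek: "exp (real k * t) = exp t * exp t ^ (k - 1)"
        by (simp add: exp_add exp_of_nat_mult)
      have "exp (real k * t) * w ^ j = exp t * (exp t * w) ^ (k - 1)"
        by (simp add: ek j power_mult_distrib)
      also have "\<dots> \<le> exp t * (exp t * w) ^ 1"
        by (intro mult_left_mono power_decreasing) (use j v' w0 in auto)
      also have "\<dots> = (exp t * exp t) * w" by (simp add: mult.assoc)
      also have "exp t * exp t = exp (2 * t)" by (simp only: mult_2 exp_add)
      finally show ?thesis .
    qed
    finally show "sum h (Pk k) \<le> exp (2 * t) * w" .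
  qed
  also have "\<dots> = real (card E) * (exp (2 * t) * w)" by simp
  finally show ?thesis by (simp add: h_def t_def w_def m_def)
qed



lemma num_bound:
  fixes A B w H K dl P :: real and M :: nat
  assumes A: "1 \<le> A" and B: "4 \<le> B" and dl: "0 < dl" and M: "1 \<le> M"
    and w0: "0 \<le> w" and H0: "0 \<le> H" and K0: "0 \<le> K" and KB: "K \<le> B^2 / 4"
    and HK: "H \<le> K * A^2 * w" and P: "P = B powr dl"
    and wD: "w^2 * (A^8 * (P * B^8) * real M^4) \<le> 2"
  shows "A * w \<le> 1" and "real M^2 * H^2 * (1+H)^M \<le> 1 / (P - 1)"
proof -
  define D where "D = A^8 * (P * B^8) * real M^4"
  have P1: "1 < P" unfolding P using B dl by simp
  have B8: "4^8 \<le> B^8" using B by (intro power_mono) auto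
  have A8: "A^2 \<le> A^8" using A by (intro power_increasing) auto
  have A84: "A^4 \<le> A^8" using A by (intro power_increasing) auto
  have M4: "real M^2 \<le> real M^4" using M by (intro power_increasing) auto
  have M1: "1 \<le> real M^2" using M by simp
  have Bpos: "0 < B" using B by simp
  have Dpos: "0 < D" unfolding D_def using A P1 Bpos M by simp
  have w2: "w^2 \<le> 2 / D" using wD Dpos by (simp add: D_def pos_le_divide_eq)
  have D1: "A^2 * B^8 \<le> D"
  proof -
    have "A^2 * B^8 \<le> A^8 * (P * B^8)"
      by (intro mult_mono A8) (use P1 Bpos in \<open>auto intro: mult_right_mono[of 1 P, simplified]\<close>)
    also have "\<dots> \<le> A^8 * (P * B^8) * real M^4"
    proof -
      have X0: "0 \<le> A^8 * (P * B^8)" using A P1 Bpos by simp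
      have "1 \<le> real M^4" using M by simp
      from mult_left_mono[OF this X0] show ?thesis by (simp only: mult_1_right)
    qed
    finally show ?thesis by (simp add: D_def)
  qed
  have "(A * w)^2 = A^2 * w^2" by (simp add: power_mult_distrib)
  also have "\<dots> \<le> A^2 * (2 / D)" using w2 by (intro mult_left_mono) auto
  also have "\<dots> \<le> 2 / B^8"
    using D1 Dpos Bpos by (simp add: divide_simps mult.commute)
  also have "\<dots> \<le> 1" using B8 by (simp add: divide_simps)
  finally have "(A * w)^2 \<le> 1" .
  then show "A * w \<le> 1" using A w0 by (simp add: power_le_one_iff abs_le_square_iff)
  have D2: "A^4 * real M^2 * (P * B^8) \<le> D"
  proof -
    have A40: "0 \<le> A^4" using A by simp
    have M20: "0 \<le> real M^2" by simp
    have h: "A^4 * real M^2 \<le> A^8 * real M^4" by (rule mult_mono[OF A84 M4 _ M20]) (use A in simp)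
    have PB: "0 \<le> P * B^8" using P1 Bpos by simp
    have "A^4 * real M^2 * (P * B^8) \<le> (A^8 * real M^4) * (P * B^8)" by (rule mult_right_mono[OF h PB])
    then show ?thesis by (simp add: D_def mult_ac)
  qed
  have MH: "(real M * H)^2 \<le> 1 / (2048 * P)"
  proof -
    have "(real M * H)^2 = real M^2 * H^2" by (simp add: power_mult_distrib)
    also have "\<dots> \<le> real M^2 * (K * A^2 * w)^2"
      using HK H0 by (intro mult_left_mono power_mono) auto
    also have "\<dots> = (real M^2 * K^2 * A^4) * w^2" by (simp add: power_mult_distrib power_mult[symmetric] mult_ac)
    also have "\<dots> \<le> (real M^2 * K^2 * A^4) * (2 / D)" using w2 by (intro mult_left_mono) auto
    also have "\<dots> \<le> 2 * K^2 / (P * B^8)"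
    proof -
      have "(real M^2 * K^2 * A^4) * (2 / D) = 2 * K^2 * (A^4 * real M^2) / D" by (simp add: mult_ac)
      also have "\<dots> \<le> 2 * K^2 * (A^4 * real M^2) / (A^4 * real M^2 * (P * B^8))"
        using D2 Dpos A M P1 Bpos by (intro divide_left_mono) (auto intro!: mult_pos_pos)
      also have "\<dots> = 2 * K^2 / (P * B^8)" using A M by simp
      finally show ?thesis .
    qed
    also have "\<dots> \<le> 2 * (B^4 / 16) / (P * B^8)"
    proof -
      have "K^2 \<le> (B^2/4)^2" using K0 KB by (intro power_mono) auto
      then have "K^2 \<le> B^4 / 16" by (simp add: power_divide power_mult[symmetric])
      then show ?thesis using P1 Bpos by (intro divide_right_mono) auto
    qed
    also have "\<dots> = 1 / (8 * P * B^4)" using Bpos by (simp add: field_simps power_add[symmetric] numeral_eq_Suc)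
    also have "\<dots> \<le> 1 / (2048 * P)"
    proof -
      have "4^4 \<le> B^4" using B by (intro power_mono) auto
      then have "2048 * P \<le> 8 * P * B^4" using P1 by simp
      then show ?thesis using P1 Bpos by (intro divide_left_mono) (auto intro!: mult_pos_pos)
    qed
    finally show ?thesis .
  qed
  have MH1: "real M * H \<le> 1"
  proof -
    have "(real M * H)^2 \<le> 1" using MH P1 by (smt (verit) divide_le_eq_1)
    then show ?thesis using H0 by (simp add: power_le_one_iff abs_le_square_iff)
  qed
  have e: "(1 + H)^M \<le> 3"
  proof -
    have "(1 + H)^M \<le> exp H ^ M" using H0 by (intro power_mono) auto
    also have "\<dots> = exp (real M * H)" by (simp add: exp_of_nat_mult)
    also have "\<dots> \<le> exp 1" using MH1 by simp
    also have "\<dots> \<le> 3" by (rule exp_le)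
    finally show ?thesis .
  qed
  have "real M^2 * H^2 * (1+H)^M = (real M * H)^2 * (1+H)^M" by (simp add: power_mult_distrib)
  also have "\<dots> \<le> (1 / (2048 * P)) * 3" using MH e H0 P1 by (intro mult_mono) auto
  also have "\<dots> \<le> 1 / P" using P1 by (simp add: divide_simps)
  also have "\<dots> \<le> 1 / (P - 1)" using P1 by (intro divide_left_mono) auto
  finally show "real M^2 * H^2 * (1+H)^M \<le> 1 / (P - 1)" .
qed



lemma comb_bound:
  fixes x :: "nat \<Rightarrow> 'g::{group_add,finite}"
  assumes g: "graph_ok n E" and n2: "n \<ge> 2" and q: "0 \<le> q" "q \<le> (1::real)"
    and mc: "1 \<le> mincut n E" and dl: "0 < \<delta>"
    and cond: "q ^ mincut n E \<le> 2 * exp (- (8 * tau_cut n E + (\<delta> + 8) * ln (2 * real n)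
                 + 4 * ln (real CARD('g))))"
  shows "(\<Sum>w\<in>Wset n x. q ^ cdiff E x w) \<le> 1 / ((2 * real n) powr \<delta> - 1)"
proof -
  define t where "t = tau_cut n E"
  define A where "A = exp t"
  define B where "B = 2 * real n"
  define r where "r = sqrt q"
  define m where "m = mincut n E"
  define w where "w = r ^ m"
  define P where "P = B powr \<delta>"
  define M where "M = CARD('g)"
  define K where "K = real (card E)"
  define H where "H = sum (\<lambda>X. r ^ cut_size n E X) (PP n)"
  define R where "R = 8 * t + (\<delta> + 8) * ln B + 4 * ln (real M)"
  have t0: "0 \<le> t" unfolding t_def by (rule tau_nonneg)
  have A1: "1 \<le> A" unfolding A_def using t0 by simp
  have B4: "4 \<le> B" unfolding B_def using n2 by simp
  have Bpos: "0 < B" using B4 by simp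
  have M1: "1 \<le> M" unfolding M_def by (simp add: Suc_leI)
  have r0: "0 \<le> r" "r \<le> 1" using q by (auto simp: r_def)
  have w0: "0 \<le> w" using r0 by (simp add: w_def)
  have K0: "0 \<le> K" by (simp add: K_def)
  have KB: "K \<le> B^2 / 4"
  proof -
    have "card E \<le> n^2" by (rule graph_card[OF g])
    then have "K \<le> real n ^ 2" unfolding K_def by (metis of_nat_le_iff of_nat_power)
    then show ?thesis by (simp add: B_def power_mult_distrib)
  qed
  have eR: "exp R = A^8 * (P * B^8) * real M^4"
  proof -
    have e1: "exp (8 * t) = A^8" unfolding A_def using exp_of_nat_mult[of 8 t] by simp
    have e2: "exp ((\<delta> + 8) * ln B) = P * B^8"
    proof -
      have "exp ((\<delta> + 8) * ln B) = B powr (\<delta> + 8)" using Bpos by (simp add: powr_def)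
      also have "\<dots> = P * B^8" using Bpos by (simp add: powr_add P_def)
      finally show ?thesis .
    qed
    have e3: "exp (4 * ln (real M)) = real M^4"
    proof -
      have "exp (4 * ln (real M)) = exp (ln (real M)) ^ 4" using exp_of_nat_mult[of 4 "ln (real M)"] by simp
      also have "\<dots> = real M ^ 4" using M1 by simp
      finally show ?thesis .
    qed
    show ?thesis unfolding R_def by (simp only: exp_add e1 e2 e3)
  qed
  have wD: "w^2 * (A^8 * (P * B^8) * real M^4) \<le> 2"
  proof -
    have "w^2 = q ^ m" unfolding w_def r_def using q
      by (simp add: power_mult[symmetric] mult.commute[of m 2] power_mult)
    also have "\<dots> \<le> 2 * exp (- R)" using cond by (simp add: m_def R_def t_def B_def M_def)
    finally have "w^2 * exp R \<le> 2 * exp (- R) * exp R" by (intro mult_right_mono) auto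
    also have "\<dots> = 2" by (simp add: exp_minus_inverse mult.assoc mult.commute[of "exp (- R)"])
    finally show ?thesis by (simp add: eR)
  qed
  have Aw: "A * w \<le> 1"
    using num_bound(1)[OF A1 B4 dl M1 w0 order_refl K0 KB _ P_def wD] A1 K0 w0 by simp
  have H0: "0 \<le> H" unfolding H_def using r0 by (intro sum_nonneg) simp
  have HK: "H \<le> K * A^2 * w"
  proof -
    have "H \<le> real (card E) * (exp (2 * tau_cut n E) * r ^ mincut n E)"
      unfolding H_def by (rule H_bound[OF g mc r0]) (use Aw in \<open>simp add: A_def t_def w_def m_def\<close>)
    also have "exp (2 * tau_cut n E) = A^2" unfolding A_def t_def
      by (metis exp_of_nat_mult of_nat_numeral)
    finally show ?thesis by (simp add: K_def w_def m_def mult.assoc)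
  qed
  have "(\<Sum>w\<in>Wset n x. q ^ cdiff E x w) \<le> real M ^ 2 * H^2 * (1 + H) ^ M"
    using sum_W_le[OF g _ q, of x] n2 by (simp add: M_def H_def r_def)
  also have "\<dots> \<le> 1 / (P - 1)"
    by (rule num_bound(2)[OF A1 B4 dl M1 w0 H0 K0 KB HK P_def wD])
  finally show ?thesis by (simp add: P_def B_def)
qed



lemma dens_int:
  fixes p :: "'b \<Rightarrow> real"
  assumes pm: "p \<in> borel_measurable M" and p0: "\<And>y. y \<in> space M \<Longrightarrow> 0 \<le> p y"
    and pprob: "prob_space (density M (\<lambda>y. ennreal (p y)))"
  shows "(\<integral>\<^sup>+ y. ennreal (p y) \<partial>M) = 1" and "integrable M p" and "integral\<^sup>L M p = 1"
proof -
  have "(\<integral>\<^sup>+ y. 1 \<partial>density M (\<lambda>y. ennreal (p y))) = (\<integral>\<^sup>+ y. ennreal (p y) * 1 \<partial>M)"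
    by (rule nn_integral_density) (use pm in auto)
  moreover have "(\<integral>\<^sup>+ y. 1 \<partial>density M (\<lambda>y. ennreal (p y))) = 1"
    using prob_space.emeasure_space_1[OF pprob] by simp
  ultimately show i1: "(\<integral>\<^sup>+ y. ennreal (p y) \<partial>M) = 1" by simp
  show int: "integrable M p"
    by (rule integrableI_nonneg) (use pm p0 i1 in auto)
  have "(\<integral>\<^sup>+ y. ennreal (p y) \<partial>M) = ennreal (integral\<^sup>L M p)"
    by (rule nn_integral_eq_integral[OF int]) (use p0 in auto)
  then show "integral\<^sup>L M p = 1" using i1
    by (metis ennreal_1 ennreal_inj integral_nonneg_AE AE_I2 p0 zero_le_one)
qed

lemma powr_pair_le:
  fixes a b :: real
  assumes a: "0 \<le> a" and b: "0 \<le> b" and al: "0 < \<alpha>" "\<alpha> < 1"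
  shows "a powr \<alpha> * b powr (1 - \<alpha>) \<le> a + b"
proof -
  define m where "m = max a b"
  have m0: "0 \<le> m" using a by (simp add: m_def)
  have "a powr \<alpha> * b powr (1 - \<alpha>) \<le> m powr \<alpha> * m powr (1 - \<alpha>)"
    by (intro mult_mono powr_mono2) (use a b al in \<open>auto simp: m_def\<close>)
  also have "\<dots> \<le> m"
  proof (cases "m = 0")
    case True then show ?thesis by simp
  next
    case False
    then have "m powr \<alpha> * m powr (1 - \<alpha>) = m powr 1" by (simp add: powr_add[symmetric])
    then show ?thesis using m0 by simp
  qed
  also have "\<dots> \<le> a + b" using a b by (simp add: m_def)
  finally show ?thesis .
qed

lemma edge_integral:
  fixes p q :: "'b \<Rightarrow> real"
  assumes pm: "p \<in> borel_measurable M" and qm: "q \<in> borel_measurable M"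
    and p0: "\<And>y. y \<in> space M \<Longrightarrow> 0 \<le> p y" and q0: "\<And>y. y \<in> space M \<Longrightarrow> 0 \<le> q y"
    and pprob: "prob_space (density M (\<lambda>y. ennreal (p y)))"
    and qprob: "prob_space (density M (\<lambda>y. ennreal (q y)))"
    and al: "0 < \<alpha>" "\<alpha> < 1"
  shows "integrable M (\<lambda>t. p t powr \<alpha> * q t powr (1 - \<alpha>))"
    and "(\<integral>\<^sup>+ t. ennreal ((q t / p t) powr (1 - \<alpha>)) \<partial>density M (\<lambda>y. ennreal (p y)))
          = ennreal (\<integral>t. p t powr \<alpha> * q t powr (1 - \<alpha>) \<partial>M)"
proof -
  have pi: "integrable M p" by (rule dens_int(2)[OF pm p0 pprob])
  have qi: "integrable M q" by (rule dens_int(2)[OF qm q0 qprob])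
  show int: "integrable M (\<lambda>t. p t powr \<alpha> * q t powr (1 - \<alpha>))"
  proof (rule Bochner_Integration.integrable_bound[OF Bochner_Integration.integrable_add[OF pi qi]])
    show "(\<lambda>t. p t powr \<alpha> * q t powr (1 - \<alpha>)) \<in> borel_measurable M" using pm qm by measurable
    show "AE x in M. norm (p x powr \<alpha> * q x powr (1 - \<alpha>)) \<le> norm (p x + q x)"
      using p0 q0 powr_pair_le[OF _ _ al] by (intro AE_I2) auto
  qed
  have "(\<integral>\<^sup>+ t. ennreal ((q t / p t) powr (1 - \<alpha>)) \<partial>density M (\<lambda>y. ennreal (p y)))
      = (\<integral>\<^sup>+ t. ennreal (p t) * ennreal ((q t / p t) powr (1 - \<alpha>)) \<partial>M)"
    by (rule nn_integral_density) (use pm qm in auto)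
  also have "\<dots> = (\<integral>\<^sup>+ t. ennreal (p t powr \<alpha> * q t powr (1 - \<alpha>)) \<partial>M)"
  proof (rule nn_integral_cong)
    fix t assume t: "t \<in> space M"
    have pt: "0 \<le> p t" and qt: "0 \<le> q t" using p0 q0 t by auto
    have "p t * (q t / p t) powr (1 - \<alpha>) = p t powr \<alpha> * q t powr (1 - \<alpha>)"
    proof (cases "p t = 0")
      case True then show ?thesis using al by simp
    next
      case False
      then have pp: "0 < p t" using pt by simp
      have "(q t / p t) powr (1 - \<alpha>) = q t powr (1 - \<alpha>) / p t powr (1 - \<alpha>)"
        by (rule powr_divide)
      moreover have "p t / p t powr (1 - \<alpha>) = p t powr \<alpha>"
      proof -
        have "p t powr \<alpha> = p t powr (1 - (1 - \<alpha>))" by simp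
        also have "\<dots> = p t powr 1 / p t powr (1 - \<alpha>)" by (rule powr_diff)
        also have "\<dots> = p t / p t powr (1 - \<alpha>)" using pp by simp
        finally show ?thesis by simp
      qed
      ultimately show ?thesis by (metis times_divide_eq_right mult.commute)
    qed
    then show "ennreal (p t) * ennreal ((q t / p t) powr (1 - \<alpha>)) = ennreal (p t powr \<alpha> * q t powr (1 - \<alpha>))"
      using pt by (simp add: ennreal_mult[symmetric])
  qed
  also have "\<dots> = ennreal (\<integral>t. p t powr \<alpha> * q t powr (1 - \<alpha>) \<partial>M)"
    by (rule nn_integral_eq_integral[OF int]) auto
  finally show "(\<integral>\<^sup>+ t. ennreal ((q t / p t) powr (1 - \<alpha>)) \<partial>density M (\<lambda>y. ennreal (p y)))
          = ennreal (\<integral>t. p t powr \<alpha> * q t powr (1 - \<alpha>) \<partial>M)" .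
qed



lemma chernoff:
  fixes x w :: "nat \<Rightarrow> 'g::group_add" and mu :: "nat \<times> nat \<Rightarrow> 'b measure"
    and f :: "nat \<times> nat \<Rightarrow> 'g \<Rightarrow> 'b \<Rightarrow> real"
  assumes fE: "finite E"
    and f_meas: "\<And>e l. e \<in> E \<Longrightarrow> f e l \<in> borel_measurable (mu e)"
    and f_nonneg: "\<And>e l y. e \<in> E \<Longrightarrow> y \<in> space (mu e) \<Longrightarrow> f e l y \<ge> 0"
    and P_prob: "\<And>e l. e \<in> E \<Longrightarrow> prob_space (density (mu e) (\<lambda>y. ennreal (f e l y)))"
    and al: "0 < \<alpha>" "\<alpha> < 1"
  shows "{y \<in> space (obs E mu f x). lik E f x y \<le> lik E f w y} \<in> sets (obs E mu f x)"
    and "measure (obs E mu f x) {y \<in> space (obs E mu f x). lik E f x y \<le> lik E f w y}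
       \<le> (\<Prod>e\<in>E. \<integral>t. f e (x (fst e) - x (snd e)) t powr \<alpha> * f e (w (fst e) - w (snd e)) t powr (1 - \<alpha>) \<partial>mu e)"
proof -
  define dx where "dx e = x (fst e) - x (snd e)" for e
  define dw where "dw e = w (fst e) - w (snd e)" for e
  define Q where "Q e = (if e \<in> E then density (mu e) (\<lambda>t. ennreal (f e (dx e) t))
                         else return (count_space UNIV) undefined)" for e
  have Qe: "Q e = density (mu e) (\<lambda>t. ennreal (f e (dx e) t))" if "e \<in> E" for e
    using that by (simp add: Q_def)
  have ps: "prob_space (Q e)" for e
    by (cases "e \<in> E") (auto simp: Q_def P_prob intro: prob_space_return)
  have obs_eq: "obs E mu f x = PiM E Q"
    unfolding obs_def by (rule PiM_cong) (auto simp: Qe dx_def)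
  have psf: "product_sigma_finite Q"
    unfolding product_sigma_finite_def using ps by (simp add: prob_space_imp_sigma_finite)
  have pps: "product_prob_space Q"
    by (rule product_prob_space.intro[OF psf]) (simp add: product_prob_space_axioms_def ps)
  interpret PS: product_prob_space Q E by (rule pps)
  have fQ: "f e l \<in> borel_measurable (Q e)" if e: "e \<in> E" for e l
  proof -
    have se: "sets (Q e) = sets (mu e)" using e by (simp only: Qe sets_density)
    show ?thesis by (subst measurable_cong_sets[OF se refl]) (rule f_meas[OF e])
  qed
  have spQ: "space (Q e) = space (mu e)" if "e \<in> E" for e using that by (simp add: Qe)
  have comp: "(\<lambda>y. f e l (y e)) \<in> borel_measurable (PiM E Q)" if e: "e \<in> E" for e l
    by (rule measurable_compose[OF measurable_component_singleton[where M=Q, OF e] fQ[OF e]])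
  have likm: "(\<lambda>y. lik E f z y) \<in> borel_measurable (PiM E Q)" for z :: "nat \<Rightarrow> 'g"
    unfolding lik_def by (rule borel_measurable_prod) (rule comp)
  define L where "L = {y \<in> space (PiM E Q). lik E f x y \<le> lik E f w y}"
  have Lsets: "L \<in> sets (PiM E Q)"
    unfolding L_def by (rule borel_measurable_le[OF likm likm])
  then show "{y \<in> space (obs E mu f x). lik E f x y \<le> lik E f w y} \<in> sets (obs E mu f x)"
    by (simp add: obs_eq L_def)
  define G where "G e t = ennreal ((f e (dw e) t / f e (dx e) t) powr (1 - \<alpha>))" for e t
  have AEpos: "AE y in PiM E Q. \<forall>e\<in>E. 0 < f e (dx e) (y e)"
  proof (rule AE_finite_allI[OF fE])
    fix e assume e: "e \<in> E"
    have "AE t in Q e. 0 < f e (dx e) t"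
    proof -
      have "AE t in density (mu e) (\<lambda>t. ennreal (f e (dx e) t)). 0 < f e (dx e) t"
        by (subst AE_density) (use f_meas[OF e] in auto)
      then show ?thesis unfolding Qe[OF e] .
    qed
    then show "AE y in PiM E Q. 0 < f e (dx e) (y e)" by (rule PS.AE_component[OF e])
  qed
  have "emeasure (PiM E Q) L = (\<integral>\<^sup>+ y. indicator L y \<partial>PiM E Q)"
    using Lsets by simp
  also have "\<dots> \<le> (\<integral>\<^sup>+ y. (\<Prod>e\<in>E. G e (y e)) \<partial>PiM E Q)"
  proof (rule nn_integral_mono_AE)
    show "AE y in PiM E Q. indicator L y \<le> (\<Prod>e\<in>E. G e (y e))"
      using AEpos
    proof eventually_elim
      case (elim y)
      show ?case
      proof (cases "y \<in> L")
        case False then show ?thesis by simp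
      next
        case True
        then have le: "lik E f x y \<le> lik E f w y" by (simp add: L_def)
        have sp: "y \<in> space (PiM E Q)" using True by (simp add: L_def)
        have lx: "lik E f x y = (\<Prod>e\<in>E. f e (dx e) (y e))" by (simp add: lik_def dx_def)
        have lw: "lik E f w y = (\<Prod>e\<in>E. f e (dw e) (y e))" by (simp add: lik_def dw_def)
        have lxpos: "0 < lik E f x y" unfolding lx using elim by (intro prod_pos) auto
        have "(\<Prod>e\<in>E. G e (y e)) = ennreal (\<Prod>e\<in>E. (f e (dw e) (y e) / f e (dx e) (y e)) powr (1 - \<alpha>))"
          unfolding G_def by (rule prod_ennreal) simp
        also have "(\<Prod>e\<in>E. (f e (dw e) (y e) / f e (dx e) (y e)) powr (1 - \<alpha>))
             = (lik E f w y / lik E f x y) powr (1 - \<alpha>)"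
          by (simp add: lx lw prod_powr_distrib[symmetric] prod_dividef)
        finally have eq: "(\<Prod>e\<in>E. G e (y e)) = ennreal ((lik E f w y / lik E f x y) powr (1 - \<alpha>))" .
        have "1 \<le> lik E f w y / lik E f x y" using le lxpos by simp
        then have "1 \<le> (lik E f w y / lik E f x y) powr (1 - \<alpha>)"
          by (rule ge_one_powr_ge_zero) (use al in simp)
        then show ?thesis using True eq by simp
      qed
    qed
  qed
  also have "\<dots> = (\<Prod>e\<in>E. integral\<^sup>N (Q e) (G e))"
    by (rule PS.product_nn_integral_prod[OF fE]) (use fQ in \<open>simp add: G_def\<close>)
  also have "\<dots> = (\<Prod>e\<in>E. ennreal (\<integral>t. f e (dx e) t powr \<alpha> * f e (dw e) t powr (1 - \<alpha>) \<partial>mu e))"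
  proof (rule prod.cong[OF refl])
    fix e assume e: "e \<in> E"
    show "integral\<^sup>N (Q e) (G e) = ennreal (\<integral>t. f e (dx e) t powr \<alpha> * f e (dw e) t powr (1 - \<alpha>) \<partial>mu e)"
      unfolding Qe[OF e] G_def
      by (rule edge_integral(2)[OF f_meas[OF e] f_meas[OF e] f_nonneg[OF e] f_nonneg[OF e] P_prob[OF e] P_prob[OF e] al])
  qed
  also have "\<dots> = ennreal (\<Prod>e\<in>E. \<integral>t. f e (dx e) t powr \<alpha> * f e (dw e) t powr (1 - \<alpha>) \<partial>mu e)"
    by (rule prod_ennreal) (auto intro!: integral_nonneg_AE)
  finally have "emeasure (PiM E Q) L \<le> ennreal (\<Prod>e\<in>E. \<integral>t. f e (dx e) t powr \<alpha> * f e (dw e) t powr (1 - \<alpha>) \<partial>mu e)" .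
  then have "measure (PiM E Q) L \<le> (\<Prod>e\<in>E. \<integral>t. f e (dx e) t powr \<alpha> * f e (dw e) t powr (1 - \<alpha>) \<partial>mu e)"
    by (simp add: PS.emeasure_eq_measure prod_nonneg integral_nonneg_AE ennreal_le_iff)
  then show "measure (obs E mu f x) {y \<in> space (obs E mu f x). lik E f x y \<le> lik E f w y}
       \<le> (\<Prod>e\<in>E. \<integral>t. f e (x (fst e) - x (snd e)) t powr \<alpha> * f e (w (fst e) - w (snd e)) t powr (1 - \<alpha>) \<partial>mu e)"
    by (simp add: obs_eq L_def dx_def dw_def)
qed



lemma helset_fin:
  fixes f :: "nat \<times> nat \<Rightarrow> 'g::finite \<Rightarrow> 'b \<Rightarrow> real"
  assumes fE: "finite E"
  shows "finite {hel \<alpha> (mu e) (f e l) (f e k) | e l k. e \<in> E \<and> l \<noteq> k}"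
proof -
  have "{hel \<alpha> (mu e) (f e l) (f e k) | e l k. e \<in> E \<and> l \<noteq> k}
      \<subseteq> (\<lambda>(e,l,k). hel \<alpha> (mu e) (f e l) (f e k)) ` (E \<times> UNIV \<times> UNIV)"
  proof
    fix z assume "z \<in> {hel \<alpha> (mu e) (f e l) (f e k) | e l k. e \<in> E \<and> l \<noteq> k}"
    then obtain e l k where z: "z = hel \<alpha> (mu e) (f e l) (f e k)" and e: "e \<in> E" by blast
    show "z \<in> (\<lambda>(e,l,k). hel \<alpha> (mu e) (f e l) (f e k)) ` (E \<times> UNIV \<times> UNIV)"
      by (rule image_eqI[of _ _ "(e,l,k)"]) (use z e in auto)
  qed
  moreover have "finite ((\<lambda>(e,l,k). hel \<alpha> (mu e) (f e l) (f e k)) ` (E \<times> UNIV \<times> UNIV))"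
    using fE by simp
  ultimately show ?thesis by (rule finite_subset)
qed

lemma helset_ne:
  fixes f :: "nat \<times> nat \<Rightarrow> 'g::finite \<Rightarrow> 'b \<Rightarrow> real"
  assumes E: "E \<noteq> {}" and M2: "CARD('g) \<ge> 2"
  shows "{hel \<alpha> (mu e) (f e l) (f e k) | e l k. e \<in> E \<and> l \<noteq> k} \<noteq> {}"
proof -
  obtain e where e: "e \<in> E" using E by blast
  have "\<exists>l k :: 'g. l \<noteq> k"
  proof (rule ccontr)
    assume "\<not> (\<exists>l k :: 'g. l \<noteq> k)"
    then have "(UNIV :: 'g set) \<subseteq> {undefined}" by auto
    then have "CARD('g) \<le> card {undefined::'g}" by (intro card_mono) auto
    then have "CARD('g) \<le> 1" by simp
    then show False using M2 by simp
  qed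
  then obtain l k :: 'g where "l \<noteq> k" by blast
  then show ?thesis using e by blast
qed

lemma hel_eq: "\<alpha> < 1 \<Longrightarrow> 1 - (1 - \<alpha>) * hel \<alpha> M p q = (\<integral>t. p t powr \<alpha> * q t powr (1 - \<alpha>) \<partial>M)"
  by (simp add: hel_def)

lemma rho_nonneg:
  fixes f :: "nat \<times> nat \<Rightarrow> 'g::finite \<Rightarrow> 'b \<Rightarrow> real"
  assumes fE: "finite E" and E: "E \<noteq> {}" and M2: "CARD('g) \<ge> 2"
    and f_nonneg: "\<And>e l y. e \<in> E \<Longrightarrow> y \<in> space (mu e) \<Longrightarrow> f e l y \<ge> 0"
    and al: "\<alpha> < 1"
  shows "0 \<le> 1 - (1 - \<alpha>) * hel_min E mu f \<alpha>"
proof -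
  have "hel_min E mu f \<alpha> \<in> {hel \<alpha> (mu e) (f e l) (f e k) | e l k. e \<in> E \<and> l \<noteq> k}"
    unfolding hel_min_def by (rule Min_in[OF helset_fin[OF fE] helset_ne[OF E M2]])
  then obtain e l k where e: "e \<in> E" and h: "hel_min E mu f \<alpha> = hel \<alpha> (mu e) (f e l) (f e k)" by blast
  have "0 \<le> (\<integral>t. f e l t powr \<alpha> * f e k t powr (1 - \<alpha>) \<partial>mu e)"
    by (rule integral_nonneg_AE) simp
  moreover have "1 - (1 - \<alpha>) * hel_min E mu f \<alpha> = (\<integral>t. f e l t powr \<alpha> * f e k t powr (1 - \<alpha>) \<partial>mu e)"
    using hel_eq[OF al, of "mu e" "f e l" "f e k"] h by simp
  ultimately show ?thesis by linarith
qed

lemma prod_rho_le: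
  fixes x w :: "nat \<Rightarrow> 'g::{group_add,finite}"
  assumes fE: "finite E"
    and f_meas: "\<And>e l. e \<in> E \<Longrightarrow> f e l \<in> borel_measurable (mu e)"
    and f_nonneg: "\<And>e l y. e \<in> E \<Longrightarrow> y \<in> space (mu e) \<Longrightarrow> f e l y \<ge> 0"
    and P_prob: "\<And>e l. e \<in> E \<Longrightarrow> prob_space (density (mu e) (\<lambda>y. ennreal (f e l y)))"
    and al: "0 < \<alpha>" "\<alpha> < 1"
  shows "(\<Prod>e\<in>E. \<integral>t. f e (x (fst e) - x (snd e)) t powr \<alpha> * f e (w (fst e) - w (snd e)) t powr (1 - \<alpha>) \<partial>mu e)
     \<le> (1 - (1 - \<alpha>) * hel_min E mu f \<alpha>) ^ cdiff E x w"
proof -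
  define rho where "rho = 1 - (1 - \<alpha>) * hel_min E mu f \<alpha>"
  define D where "D e \<longleftrightarrow> w (fst e) - w (snd e) \<noteq> x (fst e) - x (snd e)" for e
  define I where "I e = (\<integral>t. f e (x (fst e) - x (snd e)) t powr \<alpha> * f e (w (fst e) - w (snd e)) t powr (1 - \<alpha>) \<partial>mu e)" for e
  have "(\<Prod>e\<in>E. I e) \<le> (\<Prod>e\<in>E. if D e then rho else 1)"
  proof (rule prod_mono)
    fix e assume e: "e \<in> E"
    have I0: "0 \<le> I e" unfolding I_def by (rule integral_nonneg_AE) simp
    have "I e \<le> (if D e then rho else 1)"
    proof (cases "D e")
      case True
      have le: "hel_min E mu f \<alpha> \<le> hel \<alpha> (mu e) (f e (x (fst e) - x (snd e))) (f e (w (fst e) - w (snd e)))"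
        unfolding hel_min_def
      proof (rule Min_le[OF helset_fin[OF fE]])
        have d: "x (fst e) - x (snd e) \<noteq> w (fst e) - w (snd e)" using True by (simp add: D_def)
        show "hel \<alpha> (mu e) (f e (x (fst e) - x (snd e))) (f e (w (fst e) - w (snd e)))
          \<in> {hel \<alpha> (mu e) (f e l) (f e k) |e l k. e \<in> E \<and> l \<noteq> k}"
          using e d by blast
      qed
      have "I e = 1 - (1 - \<alpha>) * hel \<alpha> (mu e) (f e (x (fst e) - x (snd e))) (f e (w (fst e) - w (snd e)))"
        unfolding I_def by (rule hel_eq[OF al(2), symmetric])
      also have "\<dots> \<le> rho" unfolding rho_def using le al by (simp add: mult_left_mono)
      finally show ?thesis using True by simp
    next
      case False
      then have eq: "w (fst e) - w (snd e) = x (fst e) - x (snd e)" by (simp add: D_def)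
      let ?p = "f e (x (fst e) - x (snd e))"
      have "I e = (\<integral>t. ?p t \<partial>mu e)"
        unfolding I_def eq
      proof (rule Bochner_Integration.integral_cong[OF refl])
        fix t assume t: "t \<in> space (mu e)"
        have p0: "0 \<le> ?p t" using f_nonneg[OF e t] .
        show "?p t powr \<alpha> * ?p t powr (1 - \<alpha>) = ?p t"
        proof (cases "?p t = 0")
          case True then show ?thesis by simp
        next
          case False
          then have "?p t powr \<alpha> * ?p t powr (1 - \<alpha>) = ?p t powr 1" by (simp add: powr_add[symmetric])
          then show ?thesis using p0 by simp
        qed
      qed
      also have "\<dots> = 1" by (rule dens_int(3)[OF f_meas[OF e] f_nonneg[OF e] P_prob[OF e]])
      finally show ?thesis using False by simp
    qed
    then show "0 \<le> I e \<and> I e \<le> (if D e then rho else 1)" using I0 by simp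
  qed
  also have "\<dots> = (\<Prod>e\<in>E \<inter> {e. D e}. rho) * (\<Prod>e\<in>E \<inter> - {e. D e}. 1)"
    by (rule prod.If_cases[OF fE])
  also have "\<dots> = rho ^ card (E \<inter> {e. D e})" by simp
  also have "E \<inter> {e. D e} = {e\<in>E. D e}" by auto
  finally show ?thesis by (simp add: I_def rho_def cdiff_def D_def)
qed



lemma err_le:
  fixes x :: "nat \<Rightarrow> 'g::{group_add,finite}" and psi :: "(nat \<times> nat \<Rightarrow> 'b) \<Rightarrow> (nat \<Rightarrow> 'g)"
  assumes g: "graph_ok n E"
    and f_meas: "\<And>e l. e \<in> E \<Longrightarrow> f e l \<in> borel_measurable (mu e)"
    and f_nonneg: "\<And>e l y. e \<in> E \<Longrightarrow> y \<in> space (mu e) \<Longrightarrow> f e l y \<ge> 0"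
    and P_prob: "\<And>e l. e \<in> E \<Longrightarrow> prob_space (density (mu e) (\<lambda>y. ennreal (f e l y)))"
    and ml: "is_ml n E mu f psi" and x: "x \<in> labels n"
    and al: "0 < \<alpha>" "\<alpha> < 1"
  shows "measure (obs E mu f x) {y \<in> space (obs E mu f x). ldist n (psi y) x \<noteq> 0}
     \<le> (\<Sum>w\<in>Wset n x. (1 - (1 - \<alpha>) * hel_min E mu f \<alpha>) ^ cdiff E x w)"
proof -
  have fE: "finite E" by (rule graph_finite[OF g])
  interpret P: prob_space "obs E mu f x"
    unfolding obs_def by (rule prob_space_PiM) (rule P_prob)
  define A where "A w = {y \<in> space (obs E mu f x). lik E f x y \<le> lik E f w y}" for w
  have As: "A w \<in> sets (obs E mu f x)" for w
    unfolding A_def by (rule chernoff(1)[OF fE f_meas f_nonneg P_prob al])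
  have sp: "space (obs E mu f x) = space (\<Pi>\<^sub>M e\<in>E. mu e)"
    by (simp add: obs_def space_PiM)
  have sub: "{y \<in> space (obs E mu f x). ldist n (psi y) x \<noteq> 0} \<subseteq> (\<Union>w\<in>Wset n x. A w)"
  proof
    fix y assume y: "y \<in> {y \<in> space (obs E mu f x). ldist n (psi y) x \<noteq> 0}"
    then have ys: "y \<in> space (\<Pi>\<^sub>M e\<in>E. mu e)" using sp by simp
    have pl: "psi y \<in> labels n" and mx: "lik E f x y \<le> lik E f (psi y) y"
      using ml ys x unfolding is_ml_def by auto
    have "\<not> (\<exists>l. psi y = shift n x l)" using y by (auto simp: ldist_def split: if_splits)
    then have "psi y \<in> Wset n x" using pl by (simp add: Wset_def)
    moreover have "y \<in> A (psi y)" using y mx by (simp add: A_def)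
    ultimately show "y \<in> (\<Union>w\<in>Wset n x. A w)" by blast
  qed
  have "measure (obs E mu f x) {y \<in> space (obs E mu f x). ldist n (psi y) x \<noteq> 0}
      \<le> measure (obs E mu f x) (\<Union>w\<in>Wset n x. A w)"
    by (rule P.finite_measure_mono[OF sub]) (use As finite_Wset in auto)
  also have "\<dots> \<le> (\<Sum>w\<in>Wset n x. measure (obs E mu f x) (A w))"
    by (rule P.finite_measure_subadditive_finite[OF finite_Wset]) (use As in auto)
  also have "\<dots> \<le> (\<Sum>w\<in>Wset n x. (1 - (1 - \<alpha>) * hel_min E mu f \<alpha>) ^ cdiff E x w)"
  proof (rule sum_mono)
    fix w assume w: "w \<in> Wset n x"
    have "measure (obs E mu f x) (A w)
       \<le> (\<Prod>e\<in>E. \<integral>t. f e (x (fst e) - x (snd e)) t powr \<alpha> * f e (w (fst e) - w (snd e)) t powr (1 - \<alpha>) \<partial>mu e)"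
      unfolding A_def by (rule chernoff(2)[OF fE f_meas f_nonneg P_prob al])
    also have "\<dots> \<le> (1 - (1 - \<alpha>) * hel_min E mu f \<alpha>) ^ cdiff E x w"
      by (rule prod_rho_le[OF fE f_meas f_nonneg P_prob al])
    finally show "measure (obs E mu f x) (A w) \<le> (1 - (1 - \<alpha>) * hel_min E mu f \<alpha>) ^ cdiff E x w" .
  qed
  finally show ?thesis .
qed

lemma pick_alpha:
  fixes v :: "real \<Rightarrow> real"
  assumes cond: "(SUP \<alpha>\<in>{0<..<1::real}. v \<alpha>) * c \<ge> R" and c: "0 < c" and R: "ln 2 < R"
  shows "\<exists>\<alpha>\<in>{0<..<1}. \<exists>t>0. t < v \<alpha> \<and> exp (- t * c) \<le> 2 * exp (- R)"
proof -
  define s where "s = (SUP \<alpha>\<in>{0<..<1::real}. v \<alpha>)"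
  define t where "t = s - ln 2 / c"
  have sc: "R \<le> s * c" using cond by (simp add: s_def)
  have "ln 2 / c < s" using sc R c by (simp add: divide_less_eq)
  then have t0: "0 < t" by (simp add: t_def)
  have "- t * c = ln 2 - s * c" using c by (simp add: t_def algebra_simps)
  then have "exp (- t * c) = 2 * exp (- (s * c))" by (simp add: exp_diff exp_minus' )
  also have "\<dots> \<le> 2 * exp (- R)" using sc by simp
  finally have ex: "exp (- t * c) \<le> 2 * exp (- R)" .
  have "\<exists>\<alpha>\<in>{0<..<1}. t < v \<alpha>"
  proof (cases "bdd_above (v ` {0<..<1})")
    case True
    have "t < s" using c by (simp add: t_def)
    then show ?thesis unfolding s_def by (subst (asm) less_cSUP_iff[OF _ True]) auto
  next
    case False
    then show ?thesis unfolding bdd_above_def by (auto simp: not_le)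
  qed
  then show ?thesis using t0 ex by blast
qed


theorem theorem5:
  fixes n :: nat and E :: "(nat \<times> nat) set"
    and mu :: "nat \<times> nat \<Rightarrow> 'b measure"
    and f :: "nat \<times> nat \<Rightarrow> 'g::{group_add,finite} \<Rightarrow> 'b \<Rightarrow> real"
    and psi :: "(nat \<times> nat \<Rightarrow> 'b) \<Rightarrow> (nat \<Rightarrow> 'g)"
    and \<delta> :: real
  assumes n2: "n \<ge> 2"
    and M2: "CARD('g) \<ge> 2"
    and graph: "graph_ok n E"
    and conn: "graph_connected n E"
    and f_meas: "\<And>e l. e \<in> E \<Longrightarrow> f e l \<in> borel_measurable (mu e)"
    and f_nonneg: "\<And>e l y. e \<in> E \<Longrightarrow> y \<in> space (mu e) \<Longrightarrow> f e l y \<ge> 0"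
    and P_prob: "\<And>e l. e \<in> E \<Longrightarrow> prob_space (density (mu e) (\<lambda>y. ennreal (f e l y)))"
    and P_ac: "\<And>e l k. e \<in> E \<Longrightarrow> absolutely_continuous
                 (density (mu e) (\<lambda>y. ennreal (f e l y))) (density (mu e) (\<lambda>y. ennreal (f e k y)))"
    and ml: "is_ml n E mu f psi"
    and \<delta>_pos: "\<delta> > 0"
    and cond:
      "(SUP \<alpha>\<in>{0<..<1::real}. (1 - \<alpha>) * hel_min E mu f \<alpha>) * real (mincut n E)
          \<ge> 8 * tau_cut n E + (\<delta> + 8) * ln (2 * real n) + 4 * ln (real CARD('g))
       \<or> (SUP \<alpha>\<in>{0<..<1::real}. (1 - \<alpha>) * D_min E mu f \<alpha>) * real (mincut n E)
          \<ge> 8 * tau_cut n E + (\<delta> + 8) * ln (2 * real n) + 4 * ln (real CARD('g))"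
  shows "err_prob n E mu f psi \<le> 1 / ((2 * real n) powr \<delta> - 1)"
  proof -
  define R where "R = 8 * tau_cut n E + (\<delta> + 8) * ln (2 * real n) + 4 * ln (real CARD('g))"
  define m where "m = mincut n E"
  define rho where "rho \<alpha> = 1 - (1 - \<alpha>) * hel_min E mu f \<alpha>" for \<alpha>
  have fE: "finite E" by (rule graph_finite[OF graph])
  have lnM: "0 \<le> ln (real CARD('g))" using M2 by simp
  have ln2n: "ln 2 \<le> ln (2 * real n)" using n2 by simp
  have ln2: "0 < ln (2::real)" by simp
  have R: "ln 2 < R"
  proof -
    have "ln 2 < (\<delta> + 8) * ln (2 * real n)"
    proof -
      have "ln 2 < 8 * ln (2::real)" using ln2 by simp
      also have "\<dots> \<le> (\<delta> + 8) * ln (2 * real n)"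
        using ln2n ln2 \<delta>_pos by (intro mult_mono) auto
      finally show ?thesis .
    qed
    then show ?thesis unfolding R_def using tau_nonneg[of n E] lnM by linarith
  qed
  have cond': "(SUP \<alpha>\<in>{0<..<1::real}. (1 - \<alpha>) * hel_min E mu f \<alpha>) * real m \<ge> R
      \<or> (SUP \<alpha>\<in>{0<..<1::real}. (1 - \<alpha>) * D_min E mu f \<alpha>) * real m \<ge> R"
    using cond by (simp add: R_def m_def)
  have m1: "1 \<le> m"
  proof (rule ccontr)
    assume "\<not> 1 \<le> m"
    then have "m = 0" by simp
    then have "R \<le> 0" using cond' by (elim disjE) (simp_all only: of_nat_0 mult_zero_right)
    then show False using R ln2 by linarith
  qed
  have Ene: "E \<noteq> {}"
  proof -
    have s1: "{1} \<subseteq> {1..n}" using n2 by simp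
    have s2: "(2::nat) \<in> {1..n}" using n2 by simp
    have s3: "{1} \<noteq> {1..n}"
    proof
      assume "{1} = {1..n}"
      then have "(2::nat) \<in> {1}" using s2 by simp
      then show False by simp
    qed
    have "{1} \<in> PP n" unfolding PP_def using s1 s3 by blast
    then have "m \<le> cut_size n E {1}" unfolding m_def by (rule mincut_le)
    also have "\<dots> \<le> card E" by (rule cut_le_card[OF graph])
    finally show ?thesis using m1 by auto
  qed
  have c0: "0 < real m" using m1 by simp
  have key: "\<exists>\<alpha>\<in>{0<..<1}. \<exists>t>0. rho \<alpha> \<le> exp (- t) \<and> exp (- t * real m) \<le> 2 * exp (- R)"
    using cond'
  proof
    assume h: "(SUP \<alpha>\<in>{0<..<1::real}. (1 - \<alpha>) * hel_min E mu f \<alpha>) * real m \<ge> R"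
    from pick_alpha[OF h c0 R] obtain \<alpha> t where al: "\<alpha> \<in> {0<..<1}" and t: "0 < t"
      "t < (1 - \<alpha>) * hel_min E mu f \<alpha>" "exp (- t * real m) \<le> 2 * exp (- R)" by blast
    have "rho \<alpha> \<le> 1 + - t" using t by (simp add: rho_def)
    also have "\<dots> \<le> exp (- t)" by (rule exp_ge_add_one_self)
    finally show ?thesis using al t by blast
  next
    assume h: "(SUP \<alpha>\<in>{0<..<1::real}. (1 - \<alpha>) * D_min E mu f \<alpha>) * real m \<ge> R"
    from pick_alpha[OF h c0 R] obtain \<alpha> t where al: "\<alpha> \<in> {0<..<1}" and t: "0 < t"
      "t < (1 - \<alpha>) * D_min E mu f \<alpha>" "exp (- t * real m) \<le> 2 * exp (- R)" by blast
    have a1: "\<alpha> < 1" using al by simp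
    have r0: "0 \<le> rho \<alpha>" unfolding rho_def by (rule rho_nonneg[OF fE Ene M2 f_nonneg a1])
    have "(1 - \<alpha>) * D_min E mu f \<alpha> = - ln (rho \<alpha>)"
      using a1 by (simp add: D_min_def rho_def)
    then have lt: "ln (rho \<alpha>) < - t" using t by simp
    have "rho \<alpha> \<le> exp (- t)"
    proof (cases "rho \<alpha> = 0")
      case True then show ?thesis by simp
    next
      case False
      then have "0 < rho \<alpha>" using r0 by simp
      then have "rho \<alpha> = exp (ln (rho \<alpha>))" by simp
      also have "\<dots> \<le> exp (- t)" using lt by simp
      finally show ?thesis .
    qed
    then show ?thesis using al t by blast
  qed
  then obtain \<alpha> t where al: "\<alpha> \<in> {0<..<1}" and t0: "0 < t" and rt: "rho \<alpha> \<le> exp (- t)"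
    and et: "exp (- t * real m) \<le> 2 * exp (- R)" by blast
  have a0: "0 < \<alpha>" and a1: "\<alpha> < 1" using al by auto
  define q where "q = exp (- t)"
  have q0: "0 \<le> q" and q1: "q \<le> 1" using t0 by (auto simp: q_def)
  have qm: "q ^ mincut n E \<le> 2 * exp (- R)"
  proof -
    have "q ^ m = exp (real m * - t)" unfolding q_def by (rule exp_of_nat_mult[symmetric])
    then show ?thesis using et by (simp add: m_def mult.commute)
  qed
  have r0: "0 \<le> rho \<alpha>" unfolding rho_def by (rule rho_nonneg[OF fE Ene M2 f_nonneg a1])
  have each: "measure (obs E mu f x) {y \<in> space (obs E mu f x). ldist n (psi y) x \<noteq> 0}
      \<le> 1 / ((2 * real n) powr \<delta> - 1)" if x: "x \<in> labels n" for x
  proof -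
    have "measure (obs E mu f x) {y \<in> space (obs E mu f x). ldist n (psi y) x \<noteq> 0}
        \<le> (\<Sum>w\<in>Wset n x. rho \<alpha> ^ cdiff E x w)"
      unfolding rho_def by (rule err_le[OF graph f_meas f_nonneg P_prob ml x a0 a1])
    also have "\<dots> \<le> (\<Sum>w\<in>Wset n x. q ^ cdiff E x w)"
      by (rule sum_mono, rule power_mono) (use rt r0 in \<open>simp_all add: q_def\<close>)
    also have "\<dots> \<le> 1 / ((2 * real n) powr \<delta> - 1)"
      by (rule comb_bound[OF graph n2 q0 q1 _ \<delta>_pos]) (use m1 qm in \<open>simp_all add: m_def R_def\<close>)
    finally show ?thesis .
  qed
  have ne: "labels n \<noteq> ({} :: (nat \<Rightarrow> 'g) set)"
  proof -
    have "(\<lambda>i\<in>{1..n}. (0::'g)) \<in> labels n" by (simp add: labels_def)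
    then show ?thesis by blast
  qed
  show ?thesis unfolding err_prob_def
    using each finite_labels ne by (subst Max_le_iff) auto
qed

end
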